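(* The quantities $R_{n,k}$, $r_{n,k}$ satisfy the system of difference equations \[ r_{n+1,k}=\Big(t_k-\sum_{j=1}^m t_jR_{n,j}-2n-1-\alpha\Big)R_{n,k}-r_{n,k},\qquad k=1,\dots,m, \] \[ \frac1{R_{n,1}}=1+\frac{R_{n-1,1}}{r_{n,1}^2}\left[\sum_{k=2}^m\frac{r_{n,k}^2}{R_{n-1,k}}+\frac{\big(n+\alpha+\sum_{k=1}^m r_{n,k}\big)\big(n+\sum_{k=1}^m r_{n,k}\big)}{1-\sum_{k=1}^mR_{n-1,k}}\right], \] \[ R_{n,k}=\frac{R_{n-1,1}}{R_{n-1,k}}\cdot\frac{r_{n,k}^2}{r_{n,1}^2}\cdot R_{n,1},\qquad k=2,\dots,m, \] with initial conditions $R_{0,k}=\frac{\omega_kt_k^\alpha e^{-t_k}}{\int_0^\infty w(x;\vec t)dx}$, $r_{0,k}=0$.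
   Context: Let $m\ge1$, $\alpha>-1$, $0<t_1<\dots<t_m$, real $\omega_0,\dots,\omega_m$ with $\sum_{k=0}^\ell\omega_k\ge0$ for $\ell=0,\dots,m$, $\theta$ the Heaviside function, $w_0(x)=x^\alpha e^{-x}$, $w(x;\vec t)=w_0(x)\big(\omega_0+\sum_k\omega_k\theta(x-t_k)\big)$ on $[0,\infty)$, $P_n$ the monic orthogonal polynomials w.r.t. $w$ ($P_0=1$), $h_n=\int_0^\infty P_n^2w\,dx$, $R_{n,k}=\omega_k\frac{w_0(t_k)}{h_n}P_n^2(t_k)$, $r_{n,k}=\omega_k\frac{w_0(t_k)}{h_{n-1}}P_n(t_k)P_{n-1}(t_k)$ (with $r_{0,k}=0$). *)

theory Defs
  imports "HOL-Analysis.Analysis" "HOL-Computational_Algebra.Polynomial"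
begin

definition w0 :: "real \<Rightarrow> real \<Rightarrow> real" where
  "w0 \<alpha> x = x powr \<alpha> * exp (- x)"

text \<open>Heaviside function (the value at 0 is irrelevant: it only enters integrals).\<close>
definition heaviside :: "real \<Rightarrow> real" where
  "heaviside y = (if y \<ge> 0 then 1 else 0)"

definition weight :: "real \<Rightarrow> nat \<Rightarrow> (nat \<Rightarrow> real) \<Rightarrow> (nat \<Rightarrow> real) \<Rightarrow> real \<Rightarrow> real" where
  "weight \<alpha> m \<omega> t x = w0 \<alpha> x * (\<omega> 0 + (\<Sum>k=1..m. \<omega> k * heaviside (x - t k)))"

definition wint :: "real \<Rightarrow> nat \<Rightarrow> (nat \<Rightarrow> real) \<Rightarrow> (nat \<Rightarrow> real) \<Rightarrow> (real \<Rightarrow> real) \<Rightarrow> real" where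
  "wint \<alpha> m \<omega> t f = (LINT x:{0..}|lborel. f x * weight \<alpha> m \<omega> t x)"

definition monic_OPs :: "real \<Rightarrow> nat \<Rightarrow> (nat \<Rightarrow> real) \<Rightarrow> (nat \<Rightarrow> real) \<Rightarrow> (nat \<Rightarrow> real poly) \<Rightarrow> bool" where
  "monic_OPs \<alpha> m \<omega> t P \<longleftrightarrow>
     (\<forall>n. degree (P n) = n \<and> lead_coeff (P n) = 1 \<and>
          (\<forall>j<n. wint \<alpha> m \<omega> t (\<lambda>x. poly (P n) x * x ^ j) = 0))"

definition hn :: "real \<Rightarrow> nat \<Rightarrow> (nat \<Rightarrow> real) \<Rightarrow> (nat \<Rightarrow> real) \<Rightarrow> (nat \<Rightarrow> real poly) \<Rightarrow> nat \<Rightarrow> real" where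
  "hn \<alpha> m \<omega> t P n = wint \<alpha> m \<omega> t (\<lambda>x. (poly (P n) x)\<^sup>2)"

definition Rnk :: "real \<Rightarrow> nat \<Rightarrow> (nat \<Rightarrow> real) \<Rightarrow> (nat \<Rightarrow> real) \<Rightarrow> (nat \<Rightarrow> real poly) \<Rightarrow> nat \<Rightarrow> nat \<Rightarrow> real" where
  "Rnk \<alpha> m \<omega> t P n k = \<omega> k * w0 \<alpha> (t k) / hn \<alpha> m \<omega> t P n * (poly (P n) (t k))\<^sup>2"

definition rnk :: "real \<Rightarrow> nat \<Rightarrow> (nat \<Rightarrow> real) \<Rightarrow> (nat \<Rightarrow> real) \<Rightarrow> (nat \<Rightarrow> real poly) \<Rightarrow> nat \<Rightarrow> nat \<Rightarrow> real" where
  "rnk \<alpha> m \<omega> t P n k = (if n = 0 then 0 else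
     \<omega> k * w0 \<alpha> (t k) / hn \<alpha> m \<omega> t P (n - 1) * poly (P n) (t k) * poly (P (n - 1)) (t k))"

end

theory Submission
  imports Defs "HOL-Real_Asymp.Real_Asymp"
begin


lemma t1: "((\<lambda>x::real. x powr c * exp (-x)) \<longlongrightarrow> 0) at_top"
  by real_asymp

lemma t2: "c > 0 \<Longrightarrow> ((\<lambda>x::real. x powr c) \<longlongrightarrow> 0) (at_right 0)"
  by real_asymp

lemma gint0:
  assumes "s > -1"
  shows "set_integrable lborel {0..} (\<lambda>x::real. x powr s * exp (-x))"
proof -
  have "Gamma (s+1) = nn_integral lborel (\<lambda>t. ennreal (indicator {0..} t * t powr (s + 1 - 1) / exp t))"
    by (rule Gamma_conv_nn_integral_real) (use assms in auto)
  hence fin: "nn_integral lborel (\<lambda>t. ennreal (indicator {0..} t * (t powr s * exp (-t)))) < \<infinity>"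
    by (simp add: exp_minus field_simps) (metis ennreal_less_top)
  show ?thesis unfolding set_integrable_def
    by (rule integrableI_nonneg) (use fin in \<open>auto simp: indicator_def\<close>)
qed

lemma w0_expand:
  assumes "x \<ge> 0"
  shows "poly p x * w0 \<alpha> x = (\<Sum>j\<le>degree p. coeff p j * (x powr (\<alpha> + real j) * exp (-x)))"
proof (cases "x = 0")
  case True thus ?thesis by (simp add: w0_def)
next
  case False
  hence "x > 0" using assms by simp
  hence "x ^ j * x powr \<alpha> = x powr (\<alpha> + real j)" for j
    by (simp add: powr_add powr_realpow)
  thus ?thesis
    by (simp add: w0_def poly_altdef sum_distrib_right mult.assoc flip: \<open>\<And>j. x ^ j * x powr \<alpha> = x powr (\<alpha> + real j)\<close>)
qed

lemma pint0:
  assumes "\<alpha> > -1"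
  shows "set_integrable lborel {0..} (\<lambda>x. poly p x * w0 \<alpha> x)"
proof -
  have "set_integrable lborel {0..} (\<lambda>x. (\<Sum>j\<le>degree p. coeff p j * (x powr (\<alpha> + real j) * exp (-x))))"
  proof -
    have "integrable lborel (\<lambda>x. \<Sum>j\<le>degree p. indicator {0..} x *\<^sub>R (coeff p j * (x powr (\<alpha> + real j) * exp (-x))))"
    proof (rule Bochner_Integration.integrable_sum)
      fix j assume "j \<in> {..degree p}"
      have "set_integrable lborel {0..} (\<lambda>x. coeff p j * (x powr (\<alpha> + real j) * exp (-x)))"
        using gint0[of "\<alpha> + real j"] assms by auto
      thus "integrable lborel (\<lambda>x. indicator {0..} x *\<^sub>R (coeff p j * (x powr (\<alpha> + real j) * exp (-x))))"
        by (simp add: set_integrable_def)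
    qed
    thus ?thesis unfolding set_integrable_def by (simp only: scaleR_sum_right)
  qed
  thus ?thesis by (rule set_integrable_cong[THEN iffD1, rotated -1]) (auto simp: w0_expand)
qed

lemma pint:
  assumes "\<alpha> > -1" "a \<ge> 0"
  shows "set_integrable lborel {a..} (\<lambda>x. poly p x * w0 \<alpha> x)"
    and "set_integrable lborel {a<..} (\<lambda>x. poly p x * w0 \<alpha> x)"
  using assms by (auto intro!: set_integrable_subset[OF pint0])

lemma F_deriv:
  fixes \<alpha> :: real
  assumes "x > 0"
  shows "((\<lambda>x. x powr (\<alpha> + 1) * exp (-x) * poly g x) has_real_derivative
           poly ([:\<alpha>+1, -1:] * g + pCons 0 (pderiv g)) x * w0 \<alpha> x) (at x)"
proof -
  have d1: "((\<lambda>x. x powr (\<alpha> + 1) * exp (-x) * poly g x) has_real_derivative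
      ((\<alpha>+1) * x powr (\<alpha> + 1 - 1) * exp (-x) * poly g x + x powr (\<alpha> + 1) * (- exp (-x)) * poly g x
        + x powr (\<alpha> + 1) * exp (-x) * poly (pderiv g) x)) (at x)"
    by (auto intro!: derivative_eq_intros has_real_derivative_powr assms simp: algebra_simps)
  have eq: "x powr (\<alpha> + 1) = x * x powr \<alpha>" using assms by (simp add: powr_add)
  show ?thesis
  proof (rule DERIV_cong[OF d1])
    show "(\<alpha>+1) * x powr (\<alpha> + 1 - 1) * exp (-x) * poly g x + x powr (\<alpha> + 1) * (- exp (-x)) * poly g x
        + x powr (\<alpha> + 1) * exp (-x) * poly (pderiv g) x = 
      poly ([:\<alpha>+1, -1:] * g + pCons 0 (pderiv g)) x * w0 \<alpha> x"
      unfolding eq by (simp add: w0_def algebra_simps)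
  qed
qed

lemma F_lim_top: "((\<lambda>x. x powr ((\<alpha>::real) + 1) * exp (-x) * poly g x) \<longlongrightarrow> 0) at_top"
proof -
  have "((\<lambda>x. \<Sum>j\<le>degree g. coeff g j * (x powr (\<alpha> + 1 + real j) * exp (-x))) \<longlongrightarrow> (\<Sum>j\<le>degree g. coeff g j * 0)) at_top"
    by (intro tendsto_intros t1)
  moreover have "eventually (\<lambda>x. (\<Sum>j\<le>degree g. coeff g j * (x powr (\<alpha> + 1 + real j) * exp (-x))) = x powr (\<alpha> + 1) * exp (-x) * poly g x) at_top"
    using eventually_gt_at_top[of 0]
  proof eventually_elim
    case (elim x)
    hence "coeff g j * (x powr (\<alpha> + 1 + real j) * exp (-x)) = x powr (\<alpha> + 1) * exp (-x) * (coeff g j * x ^ j)" for j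
      by (simp add: powr_add powr_realpow mult_ac)
    hence "(\<Sum>j\<le>degree g. coeff g j * (x powr (\<alpha> + 1 + real j) * exp (-x))) = (\<Sum>j\<le>degree g. x powr (\<alpha> + 1) * exp (-x) * (coeff g j * x ^ j))"
      by (intro sum.cong refl)
    thus ?case
      by (simp add: poly_altdef sum_distrib_left)
  qed
  ultimately show ?thesis by (simp add: tendsto_cong)
qed

lemma F_lim_right:
  fixes \<alpha> :: real
  assumes "a \<ge> 0" "\<alpha> > -1"
  shows "((\<lambda>x. x powr (\<alpha> + 1) * exp (-x) * poly g x) \<longlongrightarrow> a powr (\<alpha> + 1) * exp (-a) * poly g a) (at_right a)"
proof (cases "a = 0")
  case True
  have "((\<lambda>x. x powr (\<alpha> + 1)) \<longlongrightarrow> 0) (at_right 0)" using t2[of "\<alpha>+1"] assms by simp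
  moreover have "((\<lambda>x. exp (-x) * poly g x) \<longlongrightarrow> exp (-0) * poly g 0) (at 0)"
    using isCont_def[THEN iffD1, of 0 "\<lambda>x. exp (-x) * poly g x"] by (auto intro!: continuous_intros)
  hence "((\<lambda>x. exp (-x) * poly g x) \<longlongrightarrow> exp (-0) * poly g 0) (at_right 0)"
    by (rule tendsto_mono[OF at_le, rotated]) simp
  ultimately have "((\<lambda>x. x powr (\<alpha> + 1) * (exp (-x) * poly g x)) \<longlongrightarrow> 0 * (exp (-0) * poly g 0)) (at_right 0)"
    by (rule tendsto_mult)
  thus ?thesis using True by (simp add: mult.assoc)
next
  case False
  hence "a > 0" using assms by simp
  hence "isCont (\<lambda>x. x powr (\<alpha> + 1) * exp (-x) * poly g x) a"
    by (intro continuous_intros) auto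
  thus ?thesis by (simp add: isCont_def filterlim_at_split)
qed

lemma ibp_J:
  fixes \<alpha> :: real
  assumes "a \<ge> 0" "\<alpha> > -1"
  shows "(LINT x:{a<..}|lborel. poly ([:\<alpha>+1, -1:] * g + pCons 0 (pderiv g)) x * w0 \<alpha> x)
         = - (a powr (\<alpha> + 1) * exp (-a) * poly g a)"
proof -
  let ?F = "\<lambda>x. x powr (\<alpha> + 1) * exp (-x) * poly g x"
  let ?f = "\<lambda>x. poly ([:\<alpha>+1, -1:] * g + pCons 0 (pderiv g)) x * w0 \<alpha> x"
  have "(LBINT x=ereal a..\<infinity>. ?f x) = 0 - ?F a"
  proof (rule interval_integral_FTC_integrable)
    show "ereal a < \<infinity>" by simp
    fix x assume "ereal a < ereal x" "ereal x < \<infinity>"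
    hence x: "x > 0" using assms by simp
    show "(?F has_vector_derivative ?f x) (at x)"
      using F_deriv[OF x] by (simp add: has_real_derivative_iff_has_vector_derivative)
    show "isCont ?f x" unfolding w0_def using x by (intro continuous_intros) auto
  next
    show "set_integrable lborel (einterval (ereal a) \<infinity>) ?f" unfolding einterval_eq by (rule pint(2)[OF assms(2,1)])
    show "((?F \<circ> real_of_ereal) \<longlongrightarrow> ?F a) (at_right (ereal a))"
      unfolding ereal_tendsto_simps using F_lim_right[OF assms] .
    show "((?F \<circ> real_of_ereal) \<longlongrightarrow> 0) (at_left \<infinity>)"
      unfolding ereal_tendsto_simps using F_lim_top .
  qed
  thus ?thesis by (simp add: interval_integral_to_infinity_eq)
qed

lemma heaviside_ind: "heaviside (x - a) = indicator {a..} x"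
  by (simp add: heaviside_def indicator_def)

locale lag =
  fixes \<alpha> :: real and m :: nat and t \<omega> :: "nat \<Rightarrow> real" and P :: "nat \<Rightarrow> real poly"
  assumes m: "m \<ge> 1"
    and alpha: "\<alpha> > -1"
    and t_pos: "0 < t 1"
    and t_mono: "\<And>k. 1 \<le> k \<Longrightarrow> k < m \<Longrightarrow> t k < t (k + 1)"
    and om_nonneg: "\<And>l. l \<le> m \<Longrightarrow> (\<Sum>k=0..l. \<omega> k) \<ge> 0"
    and om_nontriv: "\<exists>l\<le>m. (\<Sum>k=0..l. \<omega> k) > 0"
    and OPs: "monic_OPs \<alpha> m \<omega> t P"
begin

lemma t_strict: "1 \<le> i \<Longrightarrow> i < j \<Longrightarrow> j \<le> m \<Longrightarrow> t i < t j"
proof (induction j)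
  case 0 thus ?case by simp
next
  case (Suc j)
  show ?case
  proof (cases "i = j")
    case True thus ?thesis using t_mono[of j] Suc.prems by simp
  next
    case False
    hence "t i < t j" using Suc by simp
    also have "t j < t (Suc j)" using t_mono[of j] Suc.prems False by simp
    finally show ?thesis .
  qed
qed

lemma t_le: "1 \<le> i \<Longrightarrow> i \<le> j \<Longrightarrow> j \<le> m \<Longrightarrow> t i \<le> t j"
  using t_strict[of i j] by (cases "i = j") auto

lemma t_pos': "1 \<le> k \<Longrightarrow> k \<le> m \<Longrightarrow> t k > 0"
  using t_le[of 1 k] t_pos by simp

definition L :: "real poly \<Rightarrow> real" where
  "L p = wint \<alpha> m \<omega> t (\<lambda>x. poly p x)"

lemma decomp:
  "indicator {0..} x *\<^sub>R (f x * weight \<alpha> m \<omega> t x) =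
     \<omega> 0 * (indicator {0..} x *\<^sub>R (f x * w0 \<alpha> x)) +
     (\<Sum>k=1..m. \<omega> k * (indicator {t k..} x *\<^sub>R (f x * w0 \<alpha> x)))"
proof (cases "x \<ge> 0")
  case True
  have "f x * weight \<alpha> m \<omega> t x = \<omega> 0 * (f x * w0 \<alpha> x) + (\<Sum>k=1..m. \<omega> k * (indicator {t k..} x * (f x * w0 \<alpha> x)))"
    unfolding weight_def heaviside_ind distrib_left sum_distrib_left
    by (intro arg_cong2[where f="(+)"] sum.cong refl) (simp_all only: mult_ac)
  thus ?thesis using True by simp
next
  case False
  have "indicator {t k..} x = (0::real)" if "k \<in> {1..m}" for k
    using t_pos'[of k] that False by (auto simp: indicator_def)
  thus ?thesis using False by simp
qed

lemma wint_integrable: "set_integrable lborel {0..} (\<lambda>x. poly p x * weight \<alpha> m \<omega> t x)"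
proof -
  have "integrable lborel (\<lambda>x. \<omega> 0 * (indicator {0..} x *\<^sub>R (poly p x * w0 \<alpha> x)) +
     (\<Sum>k=1..m. \<omega> k * (indicator {t k..} x *\<^sub>R (poly p x * w0 \<alpha> x))))"
  proof (intro Bochner_Integration.integrable_add Bochner_Integration.integrable_sum integrable_mult_right)
    show "integrable lborel (\<lambda>x. indicator {0..} x *\<^sub>R (poly p x * w0 \<alpha> x))"
      using pint0[OF alpha] by (simp add: set_integrable_def)
    fix k assume "k \<in> {1..m}"
    thus "integrable lborel (\<lambda>x. indicator {t k..} x *\<^sub>R (poly p x * w0 \<alpha> x))"
      using pint(1)[OF alpha, of "t k" p] t_pos'[of k] by (simp add: set_integrable_def)
  qed
  thus ?thesis unfolding set_integrable_def decomp .
qed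

lemma L_decomp:
  "L p = \<omega> 0 * (LINT x:{0..}|lborel. poly p x * w0 \<alpha> x) +
     (\<Sum>k=1..m. \<omega> k * (LINT x:{t k..}|lborel. poly p x * w0 \<alpha> x))"
proof -
  have "L p = integral\<^sup>L lborel (\<lambda>x. \<omega> 0 * (indicator {0..} x *\<^sub>R (poly p x * w0 \<alpha> x)) +
     (\<Sum>k=1..m. \<omega> k * (indicator {t k..} x *\<^sub>R (poly p x * w0 \<alpha> x))))"
    unfolding L_def wint_def set_lebesgue_integral_def decomp ..
  also have "\<dots> = \<omega> 0 * integral\<^sup>L lborel (\<lambda>x. indicator {0..} x *\<^sub>R (poly p x * w0 \<alpha> x)) +
     (\<Sum>k=1..m. \<omega> k * integral\<^sup>L lborel (\<lambda>x. indicator {t k..} x *\<^sub>R (poly p x * w0 \<alpha> x)))"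
  proof -
    have i0: "integrable lborel (\<lambda>x. indicator {0..} x *\<^sub>R (poly p x * w0 \<alpha> x))"
      using pint0[OF alpha] by (simp add: set_integrable_def)
    have ik: "integrable lborel (\<lambda>x. indicator {t k..} x *\<^sub>R (poly p x * w0 \<alpha> x))" if "k \<in> {1..m}" for k
      using pint(1)[OF alpha, of "t k" p] t_pos'[of k] that by (simp add: set_integrable_def)
    show ?thesis
      using i0 ik by (subst Bochner_Integration.integral_add) (auto simp: Bochner_Integration.integral_sum)
  qed
  finally show ?thesis by (simp add: set_lebesgue_integral_def)
qed

lemma L_add: "L (p + q) = L p + L q"
  unfolding L_def wint_def poly_add distrib_right
  by (rule set_integral_add(2)[OF wint_integrable wint_integrable])

lemma L_smult: "L (smult c p) = c * L p"
  unfolding L_def wint_def poly_smult mult.assoc by simp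

lemma L_0[simp]: "L 0 = 0"
  using L_smult[of 0 0] by simp

lemma L_minus: "L (- p) = - L p"
  using L_smult[of "-1" p] by simp

lemma L_diff: "L (p - q) = L p - L q"
  using L_add[of p "-q"] L_minus[of q] by simp

lemma L_sum: "L (\<Sum>i\<in>I. f i) = (\<Sum>i\<in>I. L (f i))"
  by (induction I rule: infinite_finite_induct) (auto simp: L_add)

lemma L_const: "L [:c:] = c * L 1"
  using L_smult[of c 1] by simp

lemma J_open:
  assumes "a \<ge> 0"
  shows "(LINT x:{a..}|lborel. poly p x * w0 \<alpha> x) = (LINT x:{a<..}|lborel. poly p x * w0 \<alpha> x)"
proof (rule set_integral_cong_set)
  show "set_borel_measurable lborel {a<..} (\<lambda>x. poly p x * w0 \<alpha> x)"
    using pint(2)[OF alpha assms, of p] unfolding set_integrable_def set_borel_measurable_def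
    by (rule borel_measurable_integrable)
  show "set_borel_measurable lborel {a..} (\<lambda>x. poly p x * w0 \<alpha> x)"
    using pint(1)[OF alpha assms, of p] unfolding set_integrable_def set_borel_measurable_def
    by (rule borel_measurable_integrable)
  show "AE x in lborel. (x \<in> {a<..}) = (x \<in> {a..})"
    using AE_lborel_singleton[of a] by eventually_elim auto
qed

lemma L_ibp:
  "L ([:\<alpha>+1, -1:] * g + pCons 0 (pderiv g)) = - (\<Sum>k=1..m. \<omega> k * w0 \<alpha> (t k) * t k * poly g (t k))"
proof -
  have "L ([:\<alpha>+1, -1:] * g + pCons 0 (pderiv g)) =
     \<omega> 0 * (- (0 powr (\<alpha> + 1) * exp (-0) * poly g 0)) +
     (\<Sum>k=1..m. \<omega> k * (- (t k powr (\<alpha> + 1) * exp (-t k) * poly g (t k))))"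
    unfolding L_decomp
    apply (subst J_open, simp)
    apply (subst ibp_J[OF _ alpha], simp)
    apply (intro arg_cong2[where f="(+)"] refl sum.cong)
    apply (subst J_open, use t_pos' in \<open>force\<close>)
    apply (subst ibp_J[OF _ alpha], use t_pos' in \<open>force\<close>)
    by simp
  also have "\<dots> = - (\<Sum>k=1..m. \<omega> k * w0 \<alpha> (t k) * t k * poly g (t k))"
  proof -
    have "t k powr (\<alpha> + 1) * exp (-t k) = w0 \<alpha> (t k) * t k" if "k \<in> {1..m}" for k
      using t_pos'[of k] that by (simp add: w0_def powr_add)
    hence "(\<Sum>k=1..m. \<omega> k * (- (t k powr (\<alpha> + 1) * exp (-t k) * poly g (t k)))) =
           (\<Sum>k=1..m. - (\<omega> k * w0 \<alpha> (t k) * t k * poly g (t k)))"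
      by (intro sum.cong refl) (simp add: mult_ac)
    thus ?thesis by (simp add: sum_negf)
  qed
  finally show ?thesis .
qed

lemma weight_l:
  assumes "l \<le> m" "l = 0 \<or> t l \<le> x" "l = m \<or> x < t (l+1)"
  shows "weight \<alpha> m \<omega> t x = w0 \<alpha> x * (\<Sum>k=0..l. \<omega> k)"
proof -
  have "\<omega> k * heaviside (x - t k) = (if k \<in> {..l} then \<omega> k else 0)" if "k \<in> {1..m}" for k
  proof (cases "k \<le> l")
    case True
    hence "t k \<le> t l" using t_le[of k l] that assms(1) by auto
    hence "t k \<le> x" using assms(2) True that by auto
    thus ?thesis using True by (simp add: heaviside_def)
  next
    case False
    hence "t (l+1) \<le> t k" using t_le[of "l+1" k] that assms(1) by auto
    hence "x < t k" using assms(3) False that by auto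
    thus ?thesis using False by (simp add: heaviside_def)
  qed
  hence "(\<Sum>k=1..m. \<omega> k * heaviside (x - t k)) = (\<Sum>k\<in>{1..m}. if k \<in> {..l} then \<omega> k else 0)"
    by (rule sum.cong[OF refl])
  also have "\<dots> = (\<Sum>k\<in>{1..m} \<inter> {..l}. \<omega> k)" by (rule sum.inter_restrict[symmetric]) simp
  also have "{1..m} \<inter> {..l} = {1..l}" using assms(1) by auto
  finally have "(\<Sum>k=1..m. \<omega> k * heaviside (x - t k)) = (\<Sum>k=1..l. \<omega> k)" .
  moreover have "(\<Sum>k=0..l. \<omega> k) = \<omega> 0 + (\<Sum>k=1..l. \<omega> k)"
    by (simp add: sum.atLeast_Suc_atMost)
  ultimately show ?thesis by (simp add: weight_def)
qed

lemma weight_nonneg: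
  assumes "x \<ge> 0"
  shows "weight \<alpha> m \<omega> t x \<ge> 0"
proof -
  define S where "S = {k\<in>{1..m}. t k \<le> x}"
  define l where "l = Max (insert 0 S)"
  have fin: "finite (insert 0 S)" by (simp add: S_def)
  have lm: "l \<le> m" unfolding l_def using fin by (subst Max_le_iff) (auto simp: S_def)
  have "l \<in> insert 0 S" unfolding l_def using fin by (rule Max_in) simp
  hence 2: "l = 0 \<or> t l \<le> x" by (auto simp: S_def)
  have 3: "l = m \<or> x < t (l+1)"
  proof (rule ccontr)
    assume "\<not> ?thesis"
    hence "l + 1 \<in> insert 0 S" using lm by (auto simp: S_def)
    hence "l + 1 \<le> l" unfolding l_def using fin by (intro Max_ge) auto
    thus False by simp
  qed
  have "w0 \<alpha> x \<ge> 0" by (simp add: w0_def)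
  thus ?thesis using weight_l[OF lm 2 3] om_nonneg[OF lm] by simp
qed

lemma weight_pos_interval:
  "\<exists>c d. 0 \<le> c \<and> c < d \<and> (\<forall>x. c < x \<and> x < d \<longrightarrow> weight \<alpha> m \<omega> t x > 0)"
proof -
  obtain l where lm: "l \<le> m" and pos: "(\<Sum>k=0..l. \<omega> k) > 0" using om_nontriv by blast
  define c where "c = (if l = 0 then 0 else t l)"
  define d where "d = (if l = m then c + 1 else t (l+1))"
  have c0: "0 \<le> c" using t_pos'[of l] lm by (auto simp: c_def)
  have cd: "c < d"
  proof (cases "l = m")
    case True thus ?thesis by (simp add: d_def)
  next
    case False
    show ?thesis
    proof (cases "l = 0")
      case True thus ?thesis using False t_pos'[of 1] m by (simp add: c_def d_def)
    next
      case False2: False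
      thus ?thesis using False t_mono[of l] lm by (simp add: c_def d_def)
    qed
  qed
  have "weight \<alpha> m \<omega> t x > 0" if "c < x" "x < d" for x
  proof -
    have "l = 0 \<or> t l \<le> x" using that by (auto simp: c_def split: if_splits)
    moreover have "l = m \<or> x < t (l+1)" using that by (auto simp: d_def split: if_splits)
    ultimately have "weight \<alpha> m \<omega> t x = w0 \<alpha> x * (\<Sum>k=0..l. \<omega> k)" using weight_l lm by blast
    moreover have "x > 0" using that c0 by simp
    hence "w0 \<alpha> x > 0" by (simp add: w0_def)
    ultimately show ?thesis using pos by simp
  qed
  thus ?thesis using c0 cd by blast
qed

lemma L_nonneg:
  assumes "\<And>x. x \<ge> 0 \<Longrightarrow> poly p x \<ge> 0"
  shows "L p \<ge> 0"
  unfolding L_def wint_def set_lebesgue_integral_def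
  by (rule Bochner_Integration.integral_nonneg_AE) (use assms weight_nonneg in \<open>auto simp: indicator_def\<close>)

lemma L_pos:
  assumes "p \<noteq> 0" "\<And>x. x \<ge> 0 \<Longrightarrow> poly p x \<ge> 0"
  shows "L p > 0"
proof -
  define f where "f = (\<lambda>x. indicator {0..} x *\<^sub>R (poly p x * weight \<alpha> m \<omega> t x))"
  have int: "integrable lborel f" using wint_integrable[of p] by (simp add: f_def set_integrable_def)
  have nn: "AE x in lborel. 0 \<le> f x"
    using assms(2) weight_nonneg by (auto simp: f_def indicator_def)
  have Lf: "L p = integral\<^sup>L lborel f" by (simp add: L_def wint_def set_lebesgue_integral_def f_def)
  have "L p \<noteq> 0"
  proof
    assume "L p = 0"
    hence ae: "AE x in lborel. f x = 0" using integral_nonneg_eq_0_iff_AE[OF int nn] Lf by simp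
    have fin: "finite {x. poly p x = 0}" by (rule poly_roots_finite[OF assms(1)])
    have ae2: "AE x in lborel. \<forall>y\<in>{x. poly p x = 0}. x \<noteq> y"
      by (subst AE_finite_all[OF fin]) (simp add: AE_lborel_singleton)
    obtain c d where cd: "0 \<le> c" "c < d" "\<And>x. c < x \<Longrightarrow> x < d \<Longrightarrow> weight \<alpha> m \<omega> t x > 0"
      using weight_pos_interval by blast
    have "AE x in lborel. x \<notin> {c<..<d}"
      using ae ae2
    proof eventually_elim
      case (elim x)
      show ?case
      proof
        assume x: "x \<in> {c<..<d}"
        hence "weight \<alpha> m \<omega> t x > 0" "x \<ge> 0" using cd by auto
        moreover have "poly p x \<noteq> 0" using elim(2) by auto
        ultimately have "f x \<noteq> 0" by (simp add: f_def)
        thus False using elim(1) by simp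
      qed
    qed
    hence "emeasure lborel {c<..<d} = 0"
      by (subst (asm) AE_iff_measurable[of "{c<..<d}"]) auto
    thus False using cd by simp
  qed
  moreover have "L p \<ge> 0" by (rule L_nonneg[OF assms(2)])
  ultimately show ?thesis by simp
qed

end



definition low :: "real poly \<Rightarrow> nat \<Rightarrow> bool" where
  "low p n \<longleftrightarrow> (\<forall>j\<ge>n. coeff p j = 0)"

lemma low_0[simp]: "low 0 n" by (simp add: low_def)
lemma low_add: "low p n \<Longrightarrow> low q n \<Longrightarrow> low (p + q) n" by (simp add: low_def)
lemma low_diff: "low p n \<Longrightarrow> low q n \<Longrightarrow> low (p - q) n" by (simp add: low_def)
lemma low_smult: "low p n \<Longrightarrow> low (smult c p) n" by (simp add: low_def)
lemma low_mono: "low p n \<Longrightarrow> n \<le> k \<Longrightarrow> low p k" by (simp add: low_def)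
lemma low_pCons0: "low p n \<Longrightarrow> low (pCons 0 p) (Suc n)"
  by (auto simp: low_def coeff_pCons')
lemma low_pderiv: "low p (Suc n) \<Longrightarrow> low (pderiv p) n"
  by (auto simp: low_def coeff_pderiv)
lemma low_top: "low p (Suc n) \<Longrightarrow> low q (Suc n) \<Longrightarrow> coeff p n = coeff q n \<Longrightarrow> low (p - q) n"
  unfolding low_def
proof (intro allI impI)
  fix j assume *: "\<forall>j\<ge>Suc n. coeff p j = 0" "\<forall>j\<ge>Suc n. coeff q j = 0" "coeff p n = coeff q n" "n \<le> j"
  show "coeff (p - q) j = 0"
  proof (cases "j = n")
    case True thus ?thesis using * by simp
  next
    case False thus ?thesis using * by simp
  qed
qed
lemma low_zero: "low p 0 \<Longrightarrow> p = 0"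
  by (auto simp: low_def poly_eq_iff)
lemma low_as_sum: "low p n \<Longrightarrow> p = (\<Sum>i<n. monom (coeff p i) i)"
  by (rule poly_eqI) (auto simp: low_def coeff_sum)

context lag
begin

lemma degP: "degree (P n) = n"
  and orth0: "j < n \<Longrightarrow> wint \<alpha> m \<omega> t (\<lambda>x. poly (P n) x * x ^ j) = 0"
  using OPs unfolding monic_OPs_def by auto

lemma lcP: "coeff (P n) n = 1"
  using OPs degP[of n] unfolding monic_OPs_def by metis

lemma lowP: "low (P n) (Suc n)"
  using degP[of n] by (auto simp: low_def intro: coeff_eq_0)

lemma P_nz: "P n \<noteq> 0"
  using lcP[of n] by auto

lemma P0: "P 0 = 1"
proof -
  have "low (P 0) 1" using lowP[of 0] by simp
  hence "P 0 = monom (coeff (P 0) 0) 0" using low_as_sum[of "P 0" 1] by simp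
  thus ?thesis using lcP[of 0] by simp
qed

lemma orth: "low r n \<Longrightarrow> L (P n * r) = 0"
proof -
  assume "low r n"
  hence "P n * r = (\<Sum>i<n. smult (coeff r i) (P n * monom 1 i))"
  proof -
    have "monom c i = smult c (monom 1 i)" for c :: real and i by (simp add: smult_monom)
    hence "P n * monom (coeff r i) i = smult (coeff r i) (P n * monom 1 i)" for i
      by (metis mult_smult_right)
    moreover have "P n * r = P n * (\<Sum>i<n. monom (coeff r i) i)"
      using low_as_sum[OF \<open>low r n\<close>] by (rule arg_cong)
    ultimately show ?thesis
      by (simp add: sum_distrib_left)
  qed
  hence "L (P n * r) = (\<Sum>i<n. coeff r i * L (P n * monom 1 i))"
    by (simp add: L_sum L_smult)
  also have "\<dots> = 0"
  proof (rule sum.neutral, intro ballI)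
    fix i assume "i \<in> {..<n}"
    hence "L (P n * monom 1 i) = 0"
      using orth0[of i n] by (simp add: L_def poly_monom)
    thus "coeff r i * L (P n * monom 1 i) = 0" by simp
  qed
  finally show ?thesis .
qed

lemma orth': "low r n \<Longrightarrow> L (r * P n) = 0"
  using orth by (simp add: mult.commute)

definition hh where "hh n = L (P n * P n)"

lemma hh_pos: "hh n > 0"
  unfolding hh_def by (rule L_pos) (auto simp: P_nz)

lemma L_split: "L (A * B) = L (A * C) + L (A * (B - C))"
proof -
  have "A * B = A * C + A * (B - C)" by (simp add: algebra_simps)
  thus ?thesis by (metis L_add)
qed

definition ee where "ee n = poly (P n) 0"
definition qq where "qq n = synthetic_div (P n) 0"

lemma P_pCons: "P n = pCons (ee n) (qq n)"
proof -
  have "[:-0, 1:] * qq n + [:ee n:] = P n"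
    unfolding qq_def ee_def by (rule synthetic_div_correct')
  thus ?thesis by simp
qed

lemma coeff_qq: "coeff (qq n) j = coeff (P n) (Suc j)"
  using arg_cong[OF P_pCons[of n], of "\<lambda>p. coeff p (Suc j)"] by simp

lemma low_qq: "low (qq n) n"
  using lowP[of n] by (auto simp: low_def coeff_qq)

lemma lc_qq: "n \<ge> 1 \<Longrightarrow> coeff (qq n) (n - 1) = 1"
  using lcP[of n] by (simp add: coeff_qq)

lemma F1: assumes "n \<ge> 1" shows "L (P n * pCons 0 (P (n-1))) = hh n"
proof -
  have "low (pCons 0 (P (n-1)) - P n) n"
  proof (rule low_top)
    show "low (pCons 0 (P (n-1))) (Suc n)" using low_pCons0[OF lowP[of "n-1"]] assms by simp
    show "low (P n) (Suc n)" by (rule lowP)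
    show "coeff (pCons 0 (P (n-1))) n = coeff (P n) n" using assms lcP[of n] lcP[of "n-1"]
      by (cases n) auto
  qed
  thus ?thesis using L_split[of "P n" "pCons 0 (P (n-1))" "P n"] orth by (simp add: hh_def)
qed

lemma F2: "L (P n * pderiv (P n)) = 0"
  by (rule orth, rule low_pderiv, rule lowP)

lemma F3: "L (P n * pCons 0 (pderiv (P n))) = real n * hh n"
proof -
  have "low (pCons 0 (pderiv (P n)) - smult (real n) (P n)) n"
  proof (rule low_top)
    show "low (pCons 0 (pderiv (P n))) (Suc n)"
      by (rule low_pCons0, rule low_pderiv, rule lowP)
    show "low (smult (real n) (P n)) (Suc n)" by (rule low_smult, rule lowP)
    show "coeff (pCons 0 (pderiv (P n))) n = coeff (smult (real n) (P n)) n"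
      using lcP[of n] by (cases n) (auto simp: coeff_pderiv)
  qed
  thus ?thesis using L_split[of "P n" "pCons 0 (pderiv (P n))" "smult (real n) (P n)"] orth
    by (simp add: hh_def L_smult)
qed

lemma F4: assumes "n \<ge> 1" shows "L (P (n-1) * pderiv (P n)) = real n * hh (n-1)"
proof -
  have "low (pderiv (P n) - smult (real n) (P (n-1))) (n-1)"
  proof (rule low_top)
    show "low (pderiv (P n)) (Suc (n-1))" using low_pderiv[OF lowP[of n]] assms by simp
    show "low (smult (real n) (P (n-1))) (Suc (n-1))" by (rule low_smult, rule lowP)
    show "coeff (pderiv (P n)) (n-1) = coeff (smult (real n) (P (n-1))) (n-1)"
      using lcP[of n] lcP[of "n-1"] assms by (auto simp: coeff_pderiv)
  qed
  thus ?thesis using L_split[of "P (n-1)" "pderiv (P n)" "smult (real n) (P (n-1))"] orth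
    by (simp add: hh_def L_smult)
qed

lemma F5: assumes "n \<ge> 1" shows "L (P n * pderiv (P (n-1))) = 0"
proof (rule orth)
  have "low (pderiv (P (n-1))) (n-1)" using low_pderiv[OF lowP[of "n-1"]] assms by simp
  thus "low (pderiv (P (n-1))) n" by (rule low_mono) simp
qed

lemma F6: "L (qq n * P n) = 0"
  by (rule orth', rule low_qq)

lemma F7: assumes "n \<ge> 1" shows "L (qq n * P (n-1)) = hh (n-1)"
proof -
  have "low (qq n - P (n-1)) (n-1)"
  proof (rule low_top)
    show "low (qq n) (Suc (n-1))" using low_qq[of n] assms by simp
    show "low (P (n-1)) (Suc (n-1))" by (rule lowP)
    show "coeff (qq n) (n-1) = coeff (P (n-1)) (n-1)" using lc_qq[OF assms] lcP by simp
  qed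
  hence "L (P (n-1) * (qq n - P (n-1))) = 0" by (rule orth)
  thus ?thesis using L_split[of "P (n-1)" "qq n" "P (n-1)"]
    by (simp add: hh_def mult.commute)
qed

lemma F8: "L (P j * qq j) = 0"
  by (rule orth, rule low_qq)

lemma F9: assumes "n \<ge> 1" shows "L (P n * qq (n-1)) = 0"
  by (rule orth, rule low_mono[OF low_qq]) simp

definition dd where "dd k = \<omega> k * w0 \<alpha> (t k)"
definition cc where "cc = L 1 - (\<Sum>k=1..m. dd k)"

lemma D: "L (pCons a f) - L (pderiv (pCons a f)) - (\<Sum>k=1..m. dd k * poly (pCons a f) (t k))
          = \<alpha> * L f + a * cc"
proof -
  have pid: "[:\<alpha>+1, -1:] * f + pCons 0 (pderiv f) = smult \<alpha> f - pCons a f + [:a:] + pderiv (pCons a f)"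
    by (rule poly_eqI) (simp add: pderiv_pCons coeff_pCons' algebra_simps)
  have "L ([:\<alpha>+1, -1:] * f + pCons 0 (pderiv f)) = - (\<Sum>k=1..m. dd k * t k * poly f (t k))"
    using L_ibp[of f] by (simp add: dd_def)
  hence "\<alpha> * L f - L (pCons a f) + a * L 1 + L (pderiv (pCons a f)) = - (\<Sum>k=1..m. dd k * t k * poly f (t k))"
    unfolding pid by (simp add: L_add L_diff L_smult L_const)
  moreover have "(\<Sum>k=1..m. dd k * poly (pCons a f) (t k)) = a * (\<Sum>k=1..m. dd k) + (\<Sum>k=1..m. dd k * t k * poly f (t k))"
    by (simp add: algebra_simps sum.distrib sum_distrib_left)
  ultimately show ?thesis by (simp add: cc_def algebra_simps)
qed

definition sg where "sg n = \<alpha> * L (qq n) + ee n * cc"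

lemma evP: "poly (P j) x = ee j + x * poly (qq j) x"
  using arg_cong[OF P_pCons[of j], of "\<lambda>p. poly p x"] by simp

lemma poly_eq_by_eval: "(\<And>x. poly p x = poly q x) \<Longrightarrow> p = (q :: real poly)"
  by (rule poly_eq_poly_eq_iff[THEN iffD1]) (rule ext)

lemma EA: "hh n - (\<Sum>k=1..m. dd k * (poly (P n) (t k))\<^sup>2) = ee n * sg n"
proof -
  have pid: "P n * P n = pCons (ee n ^ 2) (qq n * (P n + [:ee n:]))"
    by (rule poly_eq_by_eval) (simp add: evP algebra_simps power2_eq_square)
  have "L (P n * P n) - L (pderiv (P n * P n)) - (\<Sum>k=1..m. dd k * poly (P n * P n) (t k))
        = \<alpha> * L (qq n * (P n + [:ee n:])) + ee n ^ 2 * cc"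
    unfolding pid by (rule D)
  moreover have "L (pderiv (P n * P n)) = 0"
    unfolding pderiv_mult L_add using F2[of n] by simp
  moreover have "L (qq n * (P n + [:ee n:])) = ee n * L (qq n)"
  proof -
    have "qq n * (P n + [:ee n:]) = qq n * P n + smult (ee n) (qq n)" by (simp add: algebra_simps)
    thus ?thesis using F6[of n] by (simp add: L_add L_smult)
  qed
  ultimately show ?thesis
    by (simp add: hh_def sg_def power2_eq_square algebra_simps)
qed

lemma EB: assumes "n \<ge> 1"
  shows "- (real n * hh (n-1)) - (\<Sum>k=1..m. dd k * poly (P n) (t k) * poly (P (n-1)) (t k))
         = \<alpha> * hh (n-1) + ee n * sg (n-1)"
proof -
  have pid: "P n * P (n-1) = pCons (ee n * ee (n-1)) (qq n * P (n-1) + smult (ee n) (qq (n-1)))"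
    by (rule poly_eq_by_eval) (simp add: evP algebra_simps)
  have "L (P n * P (n-1)) - L (pderiv (P n * P (n-1))) - (\<Sum>k=1..m. dd k * poly (P n * P (n-1)) (t k))
        = \<alpha> * L (qq n * P (n-1) + smult (ee n) (qq (n-1))) + (ee n * ee (n-1)) * cc"
    unfolding pid by (rule D)
  moreover have "L (P n * P (n-1)) = 0"
    by (rule orth) (use lowP[of "n-1"] assms in simp)
  moreover have "L (pderiv (P n * P (n-1))) = real n * hh (n-1)"
    using F4[OF assms] F5[OF assms] by (simp add: pderiv_mult L_add)
  moreover have "L (qq n * P (n-1) + smult (ee n) (qq (n-1))) = hh (n-1) + ee n * L (qq (n-1))"
    using F7[OF assms] by (simp add: L_add L_smult)
  ultimately show ?thesis
    by (simp add: sg_def algebra_simps mult.assoc)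
qed

lemma ee_nz: "ee j \<noteq> 0"
proof (cases "j = 0")
  case True thus ?thesis by (simp add: ee_def P0)
next
  case False
  show ?thesis
  proof
    assume e0: "ee j = 0"
    have qnz: "qq j \<noteq> 0" using lc_qq[of j] False by auto
    have "L (P j * qq j) = 0" by (rule F8)
    moreover have "P j * qq j = pCons 0 (qq j * qq j)"
      by (rule poly_eq_by_eval) (simp add: evP e0)
    moreover have "L (pCons 0 (qq j * qq j)) > 0"
    proof (rule L_pos)
      show "pCons 0 (qq j * qq j) \<noteq> 0" using qnz by simp
      fix x :: real assume "x \<ge> 0"
      thus "poly (pCons 0 (qq j * qq j)) x \<ge> 0" by simp
    qed
    ultimately show False by simp
  qed
qed

lemma EW: assumes "n \<ge> 1"
  shows "ee (n-1) * sg n - ee n * sg (n-1) = \<alpha> * hh (n-1)"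
proof -
  define H where "H = smult (ee (n-1)) (qq n) - smult (ee n) (qq (n-1))"
  have 1: "L (H * P (n-1)) = ee (n-1) * hh (n-1)"
  proof -
    have "H * P (n-1) = smult (ee (n-1)) (qq n * P (n-1)) - smult (ee n) (P (n-1) * qq (n-1))"
      by (simp add: H_def algebra_simps)
    thus ?thesis using F7[OF assms] F8[of "n-1"] by (simp add: L_diff L_smult)
  qed
  have 2: "L (H * P (n-1)) = ee (n-1) * L H"
  proof -
    have "H * P (n-1) = smult (ee (n-1)) H + (smult (ee (n-1)) (P n * qq (n-1)) - smult (ee n) (P (n-1) * qq (n-1)))"
      by (rule poly_eq_by_eval) (simp add: H_def evP algebra_simps)
    thus ?thesis using F9[OF assms] F8[of "n-1"] by (simp add: L_add L_diff L_smult)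
  qed
  have "L H = hh (n-1)" using 1 2 ee_nz[of "n-1"] by simp
  hence "ee (n-1) * L (qq n) - ee n * L (qq (n-1)) = hh (n-1)"
    by (simp add: H_def L_diff L_smult)
  thus ?thesis by (simp add: sg_def algebra_simps flip: \<open>ee (n-1) * L (qq n) - ee n * L (qq (n-1)) = hh (n-1)\<close>)
qed

lemma sq_zero: assumes "L (E * E) = 0" shows "E = 0"
proof (rule ccontr)
  assume "E \<noteq> 0"
  hence "L (E * E) > 0" by (intro L_pos) auto
  thus False using assms by simp
qed

lemma zero_test:
  assumes "n \<ge> 1" "low E (Suc n)" "L (E * P n) = 0" "L (E * P (n-1)) = 0"
    "\<And>r. low r (n-1) \<Longrightarrow> L (E * r) = 0"
  shows "E = 0"
proof -
  define E1 where "E1 = E - smult (coeff E n) (P n)"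
  have l1: "low E1 n" unfolding E1_def
    by (rule low_top[OF assms(2) low_smult[OF lowP]]) (simp add: lcP)
  define E2 where "E2 = E1 - smult (coeff E1 (n-1)) (P (n-1))"
  have l2: "low E2 (n-1)" unfolding E2_def
    by (rule low_top) (use l1 assms(1) lowP[of "n-1"] lcP[of "n-1"] in \<open>auto intro: low_smult\<close>)
  have "E = smult (coeff E n) (P n) + smult (coeff E1 (n-1)) (P (n-1)) + E2"
    by (simp add: E1_def E2_def)
  hence "E * E = smult (coeff E n) (E * P n) + smult (coeff E1 (n-1)) (E * P (n-1)) + E * E2"
    by (metis distrib_left mult_smult_right)
  hence "L (E * E) = 0" using assms(3,4) assms(5)[OF l2] by (simp add: L_add L_smult)
  thus ?thesis by (rule sq_zero)
qed

definition aa where "aa n = L (pCons 0 (P n * P n)) / hh n"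

lemma RR:
  assumes "n \<ge> 1"
  shows "poly (P (Suc n)) x = x * poly (P n) x - aa n * poly (P n) x - hh n / hh (n-1) * poly (P (n-1)) x"
proof -
  define a where "a = aa n"
  define b where "b = hh n / hh (n-1)"
  define E where "E = (P (Suc n) - pCons 0 (P n)) + smult a (P n) + smult b (P (n-1))"
  have Eexp: "L (E * X) = L (P (Suc n) * X) - L (pCons 0 (P n * X)) + a * L (P n * X) + b * L (P (n-1) * X)" for X
  proof -
    have "E * X = P (Suc n) * X - pCons 0 (P n * X) + smult a (P n * X) + smult b (P (n-1) * X)"
      by (simp add: E_def algebra_simps)
    thus ?thesis by (simp add: L_add L_diff L_smult)
  qed
  have "E = 0"
  proof (rule zero_test[OF assms])
    have "low (P (Suc n) - pCons 0 (P n)) (Suc n)"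
      by (rule low_top[OF lowP low_pCons0[OF lowP]]) (simp add: lcP)
    moreover have "low (smult a (P n)) (Suc n)" by (rule low_smult[OF lowP])
    moreover have "low (smult b (P (n-1))) (Suc n)"
      by (rule low_smult, rule low_mono[OF lowP]) (use assms in simp)
    ultimately show "low E (Suc n)" unfolding E_def by (intro low_add)
  next
    have "L (P (Suc n) * P n) = 0" by (rule orth[OF lowP])
    moreover have "L (P (n-1) * P n) = 0" by (rule orth') (use lowP[of "n-1"] assms in simp)
    moreover have "a * hh n = L (pCons 0 (P n * P n))" using hh_pos[of n] by (simp add: a_def aa_def)
    ultimately show "L (E * P n) = 0" unfolding Eexp by (simp add: hh_def)
  next
    have "L (P (Suc n) * P (n-1)) = 0" by (rule orth, rule low_mono[OF lowP]) (use assms in simp)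
    moreover have "L (pCons 0 (P n * P (n-1))) = hh n" using F1[OF assms] by simp
    moreover have "L (P n * P (n-1)) = 0" by (rule orth) (use lowP[of "n-1"] assms in simp)
    moreover have "b * hh (n-1) = hh n" using hh_pos[of "n-1"] by (simp add: b_def)
    ultimately show "L (E * P (n-1)) = 0" unfolding Eexp by (simp add: hh_def)
  next
    fix r assume r: "low r (n-1)"
    have "L (P (Suc n) * r) = 0" by (rule orth, rule low_mono[OF r]) simp
    moreover have "L (P n * pCons 0 r) = 0" by (rule orth) (use low_pCons0[OF r] assms in simp)
    hence "L (pCons 0 (P n * r)) = 0" by simp
    moreover have "L (P n * r) = 0" by (rule orth, rule low_mono[OF r]) simp
    moreover have "L (P (n-1) * r) = 0" by (rule orth[OF r])
    ultimately show "L (E * r) = 0" unfolding Eexp by simp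
  qed
  hence "poly E x = 0" by simp
  thus ?thesis by (simp add: E_def a_def b_def algebra_simps)
qed

lemma RR0: "poly (P 1) x = x * poly (P 0) x - aa 0 * poly (P 0) x"
proof -
  define a where "a = aa 0"
  define E where "E = (P (Suc 0) - pCons 0 (P 0)) + smult a (P 0)"
  have "low (P (Suc 0) - pCons 0 (P 0)) (Suc 0)"
    by (rule low_top[OF lowP low_pCons0[OF lowP]]) (simp add: lcP)
  moreover have "low (smult a (P 0)) (Suc 0)" by (rule low_smult[OF lowP])
  ultimately have lE: "low E (Suc 0)" unfolding E_def by (rule low_add)
  have "L (E * P 0) = 0"
  proof -
    have "E * P 0 = P (Suc 0) * P 0 - pCons 0 (P 0 * P 0) + smult a (P 0 * P 0)"
      by (simp add: E_def algebra_simps)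
    moreover have "L (P (Suc 0) * P 0) = 0" by (rule orth) (use lowP[of 0] in simp)
    moreover have "a * hh 0 = L (pCons 0 (P 0 * P 0))" using hh_pos[of 0] by (simp add: a_def aa_def)
    ultimately show ?thesis by (simp add: L_add L_diff L_smult hh_def)
  qed
  moreover have "E = smult (coeff E 0) (P 0) + (E - smult (coeff E 0) (P 0))" by simp
  moreover have "E - smult (coeff E 0) (P 0) = 0"
    by (rule low_zero, rule low_top[OF lE low_smult[OF lowP]]) (simp add: lcP)
  ultimately have "E = smult (coeff E 0) (P 0)" by simp
  hence "E * E = smult (coeff E 0) (E * P 0)" by (metis mult_smult_right)
  hence "L (E * E) = 0" using \<open>L (E * P 0) = 0\<close> by (simp add: L_smult)
  hence "E = 0" by (rule sq_zero)
  hence "poly E x = 0" by simp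
  thus ?thesis by (simp add: E_def a_def algebra_simps)
qed

lemma AL: "L (pCons 0 (P n * P n)) = (2 * real n + 1 + \<alpha>) * hh n + (\<Sum>k=1..m. dd k * t k * (poly (P n) (t k))\<^sup>2)"
proof -
  have pid: "[:\<alpha>+1, -1:] * (P n * P n) + pCons 0 (pderiv (P n * P n))
     = smult (\<alpha>+1) (P n * P n) - pCons 0 (P n * P n) + smult 2 (pCons 0 (P n * pderiv (P n)))"
    by (rule poly_eq_by_eval) (simp add: pderiv_mult algebra_simps)
  have F3': "L (pCons 0 (P n * pderiv (P n))) = real n * hh n" using F3[of n] by simp
  have "L ([:\<alpha>+1, -1:] * (P n * P n) + pCons 0 (pderiv (P n * P n))) =
        - (\<Sum>k=1..m. dd k * t k * (poly (P n) (t k))\<^sup>2)"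
    using L_ibp[of "P n * P n"] by (simp add: dd_def power2_eq_square mult_ac)
  hence "(\<alpha>+1) * hh n - L (pCons 0 (P n * P n)) + 2 * (real n * hh n) = - (\<Sum>k=1..m. dd k * t k * (poly (P n) (t k))\<^sup>2)"
    unfolding pid by (simp only: L_add L_diff L_smult F3' hh_def)
  thus ?thesis by (simp add: algebra_simps)
qed

lemma hn_eq: "hn \<alpha> m \<omega> t P n = hh n"
  by (simp add: hn_def hh_def L_def power2_eq_square)

lemma Rnk_eq: "Rnk \<alpha> m \<omega> t P n k = dd k / hh n * (poly (P n) (t k))\<^sup>2"
  by (simp add: Rnk_def hn_eq dd_def)

lemma rnk_eq: "rnk \<alpha> m \<omega> t P n k = (if n = 0 then 0 else dd k / hh (n-1) * poly (P n) (t k) * poly (P (n-1)) (t k))"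
  by (simp add: rnk_def hn_eq dd_def)

lemma eq1: "rnk \<alpha> m \<omega> t P (n + 1) k =
   (t k - (\<Sum>j=1..m. t j * Rnk \<alpha> m \<omega> t P n j) - 2 * real n - 1 - \<alpha>) * Rnk \<alpha> m \<omega> t P n k - rnk \<alpha> m \<omega> t P n k"
proof -
  define S where "S = (\<Sum>j=1..m. dd j * t j * (poly (P n) (t j))\<^sup>2)"
  have hpos: "hh n > 0" by (rule hh_pos)
  have sumR: "(\<Sum>j=1..m. t j * Rnk \<alpha> m \<omega> t P n j) = S / hh n"
    unfolding S_def Rnk_eq sum_divide_distrib by (intro sum.cong refl) (simp add: field_simps)
  have aa: "aa n = 2 * real n + 1 + \<alpha> + S / hh n"
    using AL[of n] hpos by (simp add: aa_def S_def field_simps)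
  show ?thesis
  proof (cases "n = 0")
    case True
    have p1: "poly (P 1) (t k) = t k - (1 + \<alpha> + S / hh 0)" using RR0[of "t k"] aa True by (simp add: P0)
    have h0: "hh 0 > 0" by (rule hh_pos)
    show ?thesis using True unfolding sumR unfolding Rnk_eq rnk_eq
      using h0 by (simp add: P0 p1 p1[unfolded One_nat_def] field_simps)
  next
    case False
    hence n1: "n \<ge> 1" by simp
    have h'pos: "hh (n-1) > 0" by (rule hh_pos)
    have rec: "poly (P (Suc n)) (t k) = t k * poly (P n) (t k) - aa n * poly (P n) (t k) - hh n / hh (n-1) * poly (P (n-1)) (t k)"
      by (rule RR[OF n1])
    show ?thesis unfolding sumR unfolding Rnk_eq rnk_eq
      using False hpos h'pos by (simp add: rec aa) (simp add: field_simps power2_eq_square)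
  qed
qed

lemma key:
  assumes "n \<ge> 1"
  shows "(real n + \<alpha> + (\<Sum>k=1..m. rnk \<alpha> m \<omega> t P n k)) * (real n + (\<Sum>k=1..m. rnk \<alpha> m \<omega> t P n k))
     = hh n / hh (n-1) * (1 - (\<Sum>k=1..m. Rnk \<alpha> m \<omega> t P n k)) * (1 - (\<Sum>k=1..m. Rnk \<alpha> m \<omega> t P (n-1) k))"
proof -
  have hpos: "hh n > 0" and h'pos: "hh (n-1) > 0" by (rule hh_pos)+
  define X where "X = (\<Sum>k=1..m. dd k * poly (P n) (t k) * poly (P (n-1)) (t k))"
  have sr: "(\<Sum>k=1..m. rnk \<alpha> m \<omega> t P n k) = X / hh (n-1)"
    unfolding X_def rnk_eq sum_divide_distrib using assms by (intro sum.cong refl) auto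
  have sR: "1 - (\<Sum>k=1..m. Rnk \<alpha> m \<omega> t P j k) = ee j * sg j / hh j" for j
  proof -
    have "(\<Sum>k=1..m. Rnk \<alpha> m \<omega> t P j k) = (\<Sum>k=1..m. dd k * (poly (P j) (t k))\<^sup>2) / hh j"
      unfolding Rnk_eq sum_divide_distrib by (intro sum.cong refl) auto
    thus ?thesis using EA[of j] hh_pos[of j] by (simp add: field_simps)
  qed
  have eb: "ee n * sg (n-1) = - (real n * hh (n-1)) - X - \<alpha> * hh (n-1)"
    using EB[OF assms] unfolding X_def by simp
  have ew: "ee (n-1) * sg n = - (real n * hh (n-1)) - X"
    using EW[OF assms] eb by simp
  have "hh n / hh (n-1) * (ee n * sg n / hh n) * (ee (n-1) * sg (n-1) / hh (n-1))
        = (ee n * sg (n-1)) * (ee (n-1) * sg n) / (hh (n-1) * hh (n-1))"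
    using hpos h'pos by (simp add: field_simps)
  also have "\<dots> = (real n + \<alpha> + X / hh (n-1)) * (real n + X / hh (n-1))"
    unfolding eb ew using h'pos by (simp add: field_simps)
  finally show ?thesis unfolding sR sr by simp
qed

end

lemma alg2:
  fixes R R' r :: "nat \<Rightarrow> real"
  assumes m: "m \<ge> 1" and b: "\<beta> \<noteq> 0"
    and rr: "\<And>k. k \<in> {1..m} \<Longrightarrow> (r k)\<^sup>2 = R k * R' k * \<beta>"
    and R'nz: "\<And>k. k \<in> {1..m} \<Longrightarrow> R' k \<noteq> 0" and r1: "r 1 \<noteq> 0"
    and d: "1 - (\<Sum>k=1..m. R' k) \<noteq> 0"
    and X: "X = \<beta> * (1 - (\<Sum>k=1..m. R k)) * (1 - (\<Sum>k=1..m. R' k))"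
  shows "1 / R 1 = 1 + R' 1 / (r 1)\<^sup>2 * ((\<Sum>k=2..m. (r k)\<^sup>2 / R' k) + X / (1 - (\<Sum>k=1..m. R' k)))"
    and "\<And>k. 2 \<le> k \<Longrightarrow> k \<le> m \<Longrightarrow> R k = R' 1 / R' k * ((r k)\<^sup>2 / (r 1)\<^sup>2) * R 1"
proof -
  have r1': "(r 1)\<^sup>2 = R 1 * R' 1 * \<beta>" using rr[of 1] m by simp
  have R1: "R 1 \<noteq> 0" using r1 r1' by auto
  have R'1: "R' 1 \<noteq> 0" using R'nz[of 1] m by simp
  have s2: "(\<Sum>k=2..m. (r k)\<^sup>2 / R' k) = \<beta> * (\<Sum>k=2..m. R k)"
    unfolding sum_distrib_left using rr R'nz by (intro sum.cong refl) (auto simp: field_simps)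
  have sR: "(\<Sum>k=1..m. R k) = R 1 + (\<Sum>k=2..m. R k)"
    using m by (simp add: sum.atLeast_Suc_atMost numeral_2_eq_2)
  have X': "X / (1 - (\<Sum>k=1..m. R' k)) = \<beta> * (1 - (\<Sum>k=1..m. R k))"
    using d unfolding X by simp
  show "1 / R 1 = 1 + R' 1 / (r 1)\<^sup>2 * ((\<Sum>k=2..m. (r k)\<^sup>2 / R' k) + X / (1 - (\<Sum>k=1..m. R' k)))"
    unfolding s2 X' r1' sR using R1 R'1 b by (simp add: field_simps)
  fix k assume "2 \<le> k" "k \<le> m"
  hence "(r k)\<^sup>2 = R k * R' k * \<beta>" "R' k \<noteq> 0" using rr R'nz by auto
  thus "R k = R' 1 / R' k * ((r k)\<^sup>2 / (r 1)\<^sup>2) * R 1"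
    unfolding r1' using R1 R'1 b by (simp add: field_simps)
qed

context lag begin

lemma rr_id: "n \<ge> 1 \<Longrightarrow> (rnk \<alpha> m \<omega> t P n k)\<^sup>2 = Rnk \<alpha> m \<omega> t P n k * Rnk \<alpha> m \<omega> t P (n-1) k * (hh n / hh (n-1))"
  using hh_pos[of n] hh_pos[of "n-1"] unfolding rnk_eq Rnk_eq by (simp add: field_simps power2_eq_square)

end

theorem lemma2p6:
  fixes \<alpha> :: real and m :: nat and t \<omega> :: "nat \<Rightarrow> real" and P :: "nat \<Rightarrow> real poly"
  defines "R \<equiv> Rnk \<alpha> m \<omega> t P" and "r \<equiv> rnk \<alpha> m \<omega> t P"
  assumes m: "m \<ge> 1"
    and alpha: "\<alpha> > -1"
    and t_pos: "0 < t 1"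
    and t_mono: "\<And>k. 1 \<le> k \<Longrightarrow> k < m \<Longrightarrow> t k < t (k + 1)"
    and om_nonneg: "\<And>l. l \<le> m \<Longrightarrow> (\<Sum>k=0..l. \<omega> k) \<ge> 0"
    and om_nontriv: "\<exists>l\<le>m. (\<Sum>k=0..l. \<omega> k) > 0"
    and OPs: "monic_OPs \<alpha> m \<omega> t P"
  shows
    "(\<forall>n k. 1 \<le> k \<and> k \<le> m \<longrightarrow>
        r (n + 1) k = (t k - (\<Sum>j=1..m. t j * R n j) - 2 * real n - 1 - \<alpha>) * R n k - r n k)
     \<and> (\<forall>n. n \<ge> 1 \<and> (\<forall>k\<in>{1..m}. R (n - 1) k \<noteq> 0) \<and> r n 1 \<noteq> 0
            \<and> 1 - (\<Sum>k=1..m. R (n - 1) k) \<noteq> 0 \<longrightarrow>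
          1 / R n 1 = 1 + R (n - 1) 1 / (r n 1)\<^sup>2 *
             ((\<Sum>k=2..m. (r n k)\<^sup>2 / R (n - 1) k)
              + (real n + \<alpha> + (\<Sum>k=1..m. r n k)) * (real n + (\<Sum>k=1..m. r n k))
                / (1 - (\<Sum>k=1..m. R (n - 1) k)))
        \<and> (\<forall>k. 2 \<le> k \<and> k \<le> m \<longrightarrow>
             R n k = R (n - 1) 1 / R (n - 1) k * ((r n k)\<^sup>2 / (r n 1)\<^sup>2) * R n 1))
     \<and> (\<forall>k. 1 \<le> k \<and> k \<le> m \<longrightarrow>
          R 0 k = \<omega> k * (t k) powr \<alpha> * exp (- t k) / (LINT x:{0..}|lborel. weight \<alpha> m \<omega> t x)
          \<and> r 0 k = 0)"
proof -
  interpret lag \<alpha> m t \<omega> P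
    using assms by unfold_locales auto
  have A: "\<forall>n k. 1 \<le> k \<and> k \<le> m \<longrightarrow>
        r (n + 1) k = (t k - (\<Sum>j=1..m. t j * R n j) - 2 * real n - 1 - \<alpha>) * R n k - r n k"
    unfolding R_def r_def using eq1 by blast
  have B: "1 / R n 1 = 1 + R (n - 1) 1 / (r n 1)\<^sup>2 *
             ((\<Sum>k=2..m. (r n k)\<^sup>2 / R (n - 1) k)
              + (real n + \<alpha> + (\<Sum>k=1..m. r n k)) * (real n + (\<Sum>k=1..m. r n k))
                / (1 - (\<Sum>k=1..m. R (n - 1) k)))
        \<and> (\<forall>k. 2 \<le> k \<and> k \<le> m \<longrightarrow>
             R n k = R (n - 1) 1 / R (n - 1) k * ((r n k)\<^sup>2 / (r n 1)\<^sup>2) * R n 1)"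
    if n: "n \<ge> 1" and nz: "\<forall>k\<in>{1..m}. R (n - 1) k \<noteq> 0" "r n 1 \<noteq> 0" "1 - (\<Sum>k=1..m. R (n - 1) k) \<noteq> 0" for n
  proof -
    have b: "hh n / hh (n-1) \<noteq> 0" using hh_pos[of n] hh_pos[of "n-1"] by simp
    note a2 = alg2[of m "hh n / hh (n-1)" "r n" "R n" "R (n-1)", OF m b]
    have rr: "\<And>k. k \<in> {1..m} \<Longrightarrow> (r n k)\<^sup>2 = R n k * R (n-1) k * (hh n / hh (n-1))"
      unfolding R_def r_def using rr_id[OF n] by blast
    show ?thesis
      using a2(1)[OF rr nz(1)[rule_format] nz(2) nz(3) key[OF n, folded R_def r_def]]
            a2(2)[OF rr nz(1)[rule_format] nz(2) nz(3) key[OF n, folded R_def r_def]]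
      by blast
  qed
  have C: "\<forall>k. 1 \<le> k \<and> k \<le> m \<longrightarrow>
          R 0 k = \<omega> k * (t k) powr \<alpha> * exp (- t k) / (LINT x:{0..}|lborel. weight \<alpha> m \<omega> t x)
          \<and> r 0 k = 0"
    unfolding R_def r_def by (simp add: Rnk_def rnk_def hn_def wint_def P0 w0_def)
  show ?thesis using A B C by blast
qed

end
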